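(* There are absolute constants $\varepsilon_0>0$ and $c_0>0$ such that, if $k\le\varepsilon_0n$, then \[ \pi(\mathcal G_{\mathrm{tr}}^c)\le e^{-c_0n}\quad\text{and}\quad\mu(\mathcal G_{\mathrm{tr}}^c)\le e^{-c_0n}. \]
   Context: $V=\mathbb F_2^k$ ($k\ge1$), $\mathrm{St}(n,k)=\{(z_1,\dots,z_n)\in V^n:\operatorname{span}(z_1,\dots,z_n)=V\}$, $\pi$ is the uniform measure on $\mathrm{St}(n,k)$ and $\mu$ the uniform measure on $V^n$. For $\xi\in V^*$, $\chi_\xi(u)=(-1)^{\xi(u)}$, $S_\xi(z)=\sum_{i=1}^n\chi_\xi(z_i)$, and $\mathcal G_{\mathrm{tr}}=\{z\in\mathrm{St}(n,k):\max_{0\ne\xi\in V^*}|S_\xi(z)|\le n/4\}$. Complements: $\pi(\mathcal G^c_{\mathrm{tr}})=1-\pi(\mathcal G_{\mathrm{tr}})$, $\mu(\mathcal G^c_{\mathrm{tr}})=1-\mu(\mathcal G_{\mathrm{tr}})$. *)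

theory Defs
  imports Complex_Main "HOL-Library.FuncSet"
begin

text \<open>V = F_2^k: vectors are functions nat \<Rightarrow> bool supported on {0..<k}
  (coordinate i is True iff it equals 1 in F_2).\<close>
definition vecs :: "nat \<Rightarrow> (nat \<Rightarrow> bool) set" where
  "vecs k = {v. \<forall>i. k \<le> i \<longrightarrow> \<not> v i}"

definition vadd :: "(nat \<Rightarrow> bool) \<Rightarrow> (nat \<Rightarrow> bool) \<Rightarrow> (nat \<Rightarrow> bool)" where
  "vadd u v = (\<lambda>i. u i \<noteq> v i)"

definition dual :: "nat \<Rightarrow> ((nat \<Rightarrow> bool) \<Rightarrow> bool) set" where
  "dual k = {\<xi>. \<forall>u\<in>vecs k. \<forall>v\<in>vecs k. \<xi> (vadd u v) = (\<xi> u \<noteq> \<xi> v)}"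

definition nonzero_functional :: "nat \<Rightarrow> ((nat \<Rightarrow> bool) \<Rightarrow> bool) \<Rightarrow> bool" where
  "nonzero_functional k \<xi> = (\<exists>u\<in>vecs k. \<xi> u)"

text \<open>Tuples (z_1,...,z_n) \<in> V^n, indexed by {0..<n}.\<close>
definition tuples :: "nat \<Rightarrow> nat \<Rightarrow> (nat \<Rightarrow> nat \<Rightarrow> bool) set" where
  "tuples n k = PiE {0..<n} (\<lambda>_. vecs k)"

text \<open>F_2-span of z_0..z_{n-1}: all linear combinations sum_{i<n} c_i z_i.\<close>
definition span2 :: "nat \<Rightarrow> (nat \<Rightarrow> nat \<Rightarrow> bool) \<Rightarrow> (nat \<Rightarrow> bool) set" where
  "span2 n z = {(\<lambda>j. odd (card {i\<in>{0..<n}. c i \<and> z i j})) | c. True}"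

definition St :: "nat \<Rightarrow> nat \<Rightarrow> (nat \<Rightarrow> nat \<Rightarrow> bool) set" where
  "St n k = {z \<in> tuples n k. span2 n z = vecs k}"

definition chi :: "((nat \<Rightarrow> bool) \<Rightarrow> bool) \<Rightarrow> (nat \<Rightarrow> bool) \<Rightarrow> real" where
  "chi \<xi> u = (if \<xi> u then -1 else 1)"

definition S_sum :: "nat \<Rightarrow> ((nat \<Rightarrow> bool) \<Rightarrow> bool) \<Rightarrow> (nat \<Rightarrow> nat \<Rightarrow> bool) \<Rightarrow> real" where
  "S_sum n \<xi> z = (\<Sum>i<n. chi \<xi> (z i))"

definition G_tr :: "nat \<Rightarrow> nat \<Rightarrow> (nat \<Rightarrow> nat \<Rightarrow> bool) set" where
  "G_tr n k = {z \<in> St n k. \<forall>\<xi>\<in>dual k. nonzero_functional k \<xi> \<longrightarrow> \<bar>S_sum n \<xi> z\<bar> \<le> real n / 4}"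

text \<open>pi(G^c) = 1 - pi(G) with pi uniform on St; mu(G^c) = 1 - mu(G) with mu uniform on V^n.\<close>
definition pi_Gc :: "nat \<Rightarrow> nat \<Rightarrow> real" where
  "pi_Gc n k = 1 - real (card (G_tr n k)) / real (card (St n k))"

definition mu_Gc :: "nat \<Rightarrow> nat \<Rightarrow> real" where
  "mu_Gc n k = 1 - real (card (G_tr n k)) / real (card (tuples n k))"

end

theory Submission
  imports Defs
begin

lemma parity_xor:
  assumes "finite X"
  shows "odd (card {x\<in>X. P x \<noteq> Q x}) = (odd (card {x\<in>X. P x}) \<noteq> odd (card {x\<in>X. Q x}))"
  using assms
proof (induction X rule: finite_induct)
  case empty then show ?case by simp
next
  case (insert x X)
  have c: "\<And>R. card {y\<in>insert x X. R y} = (if R x then Suc (card {y\<in>X. R y}) else card {y\<in>X. R y})"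
  proof -
    fix R
    have h: "{y\<in>insert x X. R y} = (if R x then insert x {y\<in>X. R y} else {y\<in>X. R y})" by auto
    have f: "finite {y\<in>X. R y}" using insert by auto
    have n: "x \<notin> {y\<in>X. R y}" using insert by auto
    show "card {y\<in>insert x X. R y} = (if R x then Suc (card {y\<in>X. R y}) else card {y\<in>X. R y})"
      unfolding h using card_insert_disjoint[OF f n] by simp
  qed
  show ?case using insert.IH by (simp only: c) auto
qed

definition ip :: "(nat \<Rightarrow> bool) \<Rightarrow> (nat \<Rightarrow> bool) \<Rightarrow> bool" where
  "ip a u = odd (card {j. a j \<and> u j})"

lemma vecs_finite: "a \<in> vecs k \<Longrightarrow> finite {j. a j}"
  unfolding vecs_def by (metis (mono_tags, lifting) finite_lessThan finite_subset lessThan_iff mem_Collect_eq not_le_imp_less subsetI)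

lemma ip_vadd: "a \<in> vecs k \<Longrightarrow> ip a (vadd u v) = (ip a u \<noteq> ip a v)"
proof -
  assume a: "a \<in> vecs k"
  have "ip a (vadd u v) = odd (card {j\<in>{j. a j}. u j \<noteq> v j})"
    unfolding ip_def vadd_def by (simp add: conj_commute)
  also have "\<dots> = (odd (card {j\<in>{j. a j}. u j}) \<noteq> odd (card {j\<in>{j. a j}. v j}))"
    by (rule parity_xor[OF vecs_finite[OF a]])
  finally show ?thesis unfolding ip_def by (simp add: conj_commute)
qed

lemma ip_dual: "a \<in> vecs k \<Longrightarrow> ip a \<in> dual k"
  unfolding dual_def using ip_vadd by blast

lemma vadd_vecs: "u \<in> vecs k \<Longrightarrow> v \<in> vecs k \<Longrightarrow> vadd u v \<in> vecs k"
  unfolding vecs_def vadd_def by auto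

lemma zero_vecs: "(\<lambda>_. False) \<in> vecs k" unfolding vecs_def by auto

lemma dual_zero: "\<xi> \<in> dual k \<Longrightarrow> \<xi> (\<lambda>_. False) = False"
proof -
  assume "\<xi> \<in> dual k"
  then have "\<xi> (vadd (\<lambda>_. False) (\<lambda>_. False)) = (\<xi> (\<lambda>_. False) \<noteq> \<xi> (\<lambda>_. False))"
    unfolding dual_def using zero_vecs by blast
  moreover have "vadd (\<lambda>_. False) (\<lambda>_. False) = (\<lambda>_. False)" unfolding vadd_def by auto
  ultimately show ?thesis by simp
qed

definition spanI :: "nat set \<Rightarrow> (nat \<Rightarrow> nat \<Rightarrow> bool) \<Rightarrow> (nat \<Rightarrow> bool) set" where
  "spanI I z = {(\<lambda>j. odd (card {i\<in>I. c i \<and> z i j})) | c. True}"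

lemma span_least:
  assumes "finite I" "(\<lambda>_. False) \<in> W" "\<And>u v. u \<in> W \<Longrightarrow> v \<in> W \<Longrightarrow> vadd u v \<in> W"
    "\<And>i. i \<in> I \<Longrightarrow> z i \<in> W"
  shows "spanI I z \<subseteq> W"
proof -
  have "\<And>c. (\<lambda>j. odd (card {i\<in>I. c i \<and> z i j})) \<in> W"
    using assms(1,4)
  proof (induction I rule: finite_induct)
    case empty then show ?case using assms(2) by simp
  next
    case (insert x I)
    have IH: "(\<lambda>j. odd (card {i\<in>I. c i \<and> z i j})) \<in> W" using insert by auto
    have zx: "z x \<in> W" using insert by auto
    have f: "\<And>j. finite {i\<in>I. c i \<and> z i j}" using insert by auto
    have n: "\<And>j. x \<notin> {i\<in>I. c i \<and> z i j}" using insert by auto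
    have h: "\<And>j. {i\<in>insert x I. c i \<and> z i j} = (if c x \<and> z x j then insert x {i\<in>I. c i \<and> z i j} else {i\<in>I. c i \<and> z i j})" by auto
    show ?case
    proof (cases "c x")
      case True
      have "(\<lambda>j. odd (card {i\<in>insert x I. c i \<and> z i j})) = vadd (\<lambda>j. odd (card {i\<in>I. c i \<and> z i j})) (z x)"
        unfolding vadd_def
      proof (rule ext)
        fix j
        show "odd (card {i\<in>insert x I. c i \<and> z i j}) = (odd (card {i\<in>I. c i \<and> z i j}) \<noteq> z x j)"
        proof (cases "z x j")
          case True
          then have "{i\<in>insert x I. c i \<and> z i j} = insert x {i\<in>I. c i \<and> z i j}" using \<open>c x\<close> by auto
          then show ?thesis using card_insert_disjoint[OF f n] True by simp
        next
          case False
          then have "{i\<in>insert x I. c i \<and> z i j} = {i\<in>I. c i \<and> z i j}" by auto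
          then show ?thesis using False by simp
        qed
      qed
      then show ?thesis using assms(3)[OF IH zx] by simp
    next
      case False
      have "(\<lambda>j. odd (card {i\<in>insert x I. c i \<and> z i j})) = (\<lambda>j. odd (card {i\<in>I. c i \<and> z i j}))"
      proof (rule ext)
        fix j
        show "odd (card {i\<in>insert x I. c i \<and> z i j}) = odd (card {i\<in>I. c i \<and> z i j})"
          using False by (intro arg_cong[where f="\<lambda>A. odd (card A)"]) auto
      qed
      then show ?thesis using IH by simp
    qed
  qed
  then show ?thesis unfolding spanI_def by auto
qed

lemma span_zero: "(\<lambda>_. False) \<in> spanI I z"
  unfolding spanI_def by (rule CollectI, rule exI[of _ "\<lambda>_. False"], simp)

lemma span_gen: "finite I \<Longrightarrow> i \<in> I \<Longrightarrow> z i \<in> spanI I z"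
  unfolding spanI_def
proof (rule CollectI, rule exI[of _ "\<lambda>l. l = i"])
  assume "i \<in> I"
  then have "\<And>j. {l\<in>I. l = i \<and> z l j} = (if z i j then {i} else {})" by auto
  then show "z i = (\<lambda>j. odd (card {l\<in>I. l = i \<and> z l j})) \<and> True" by auto
qed

lemma span_vadd: "finite I \<Longrightarrow> u \<in> spanI I z \<Longrightarrow> v \<in> spanI I z \<Longrightarrow> vadd u v \<in> spanI I z"
proof -
  assume fI: "finite I" and "u \<in> spanI I z" "v \<in> spanI I z"
  then obtain c1 c2 where u: "u = (\<lambda>j. odd (card {i\<in>I. c1 i \<and> z i j}))"
    and v: "v = (\<lambda>j. odd (card {i\<in>I. c2 i \<and> z i j}))" unfolding spanI_def by auto
  have "\<And>j. odd (card {i\<in>I. (c1 i \<noteq> c2 i) \<and> z i j}) = (u j \<noteq> v j)"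
  proof -
    fix j
    have "odd (card {i\<in>I. (c1 i \<noteq> c2 i) \<and> z i j}) = odd (card {i\<in>I. (c1 i \<and> z i j) \<noteq> (c2 i \<and> z i j)})"
      by (rule arg_cong[where f="\<lambda>A. odd (card A)"]) auto
    also have "\<dots> = (u j \<noteq> v j)" unfolding u v by (rule parity_xor[OF fI])
    finally show "odd (card {i\<in>I. (c1 i \<noteq> c2 i) \<and> z i j}) = (u j \<noteq> v j)" .
  qed
  then have "vadd u v = (\<lambda>j. odd (card {i\<in>I. (c1 i \<noteq> c2 i) \<and> z i j}))"
    unfolding vadd_def by auto
  then show ?thesis unfolding spanI_def by (intro CollectI exI[of _ "\<lambda>i. c1 i \<noteq> c2 i"]) simp
qed

lemma ip_single: "ip (\<lambda>j. j = k) u = u k"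
proof -
  have "{j. j = k \<and> u j} = (if u k then {k} else {})" by auto
  then show ?thesis unfolding ip_def by simp
qed

lemma ip_upd:
  assumes "a \<in> vecs k"
  shows "ip (a(k := b)) u = (ip a u \<noteq> (b \<and> u k))"
proof -
  have f: "finite {j. a j \<and> u j}" using vecs_finite[OF assms] by (auto intro: finite_subset)
  have n: "k \<notin> {j. a j \<and> u j}" using assms unfolding vecs_def by auto
  have "{j. (a(k := b)) j \<and> u j} = (if b \<and> u k then insert k {j. a j \<and> u j} else {j. a j \<and> u j})"
    using n by auto
  then show ?thesis unfolding ip_def using card_insert_disjoint[OF f n] by simp
qed

lemma vecs_mono: "k \<le> m \<Longrightarrow> v \<in> vecs k \<Longrightarrow> v \<in> vecs m"
  unfolding vecs_def by auto

lemma vecs_Suc_iff: "v \<in> vecs (Suc k) = (\<forall>i. k < i \<longrightarrow> \<not> v i)"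
  unfolding vecs_def by (auto simp: Suc_le_eq)

lemma vecs_k_iff: "v \<in> vecs k = ((\<forall>i. k < i \<longrightarrow> \<not> v i) \<and> \<not> v k)"
  unfolding vecs_def by (auto simp: le_less)

lemma rank_lemma:
  "\<forall>(I::nat set) z. finite I \<longrightarrow> (\<forall>i\<in>I. z i \<in> vecs k) \<longrightarrow>
     (\<forall>a\<in>vecs k. a \<noteq> (\<lambda>_. False) \<longrightarrow> (\<exists>i\<in>I. ip a (z i))) \<longrightarrow> vecs k \<subseteq> spanI I z"
proof (induction k)
  case 0
  have "vecs 0 = {\<lambda>_. False}" unfolding vecs_def by auto
  then show ?case using span_zero by auto
next
  case (Suc k)
  show ?case
  proof (intro allI impI)
    fix I :: "nat set" and z :: "nat \<Rightarrow> nat \<Rightarrow> bool"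
    assume fI: "finite I" and zin: "\<forall>i\<in>I. z i \<in> vecs (Suc k)"
      and hyp: "\<forall>a\<in>vecs (Suc k). a \<noteq> (\<lambda>_. False) \<longrightarrow> (\<exists>i\<in>I. ip a (z i))"
    have "(\<lambda>j. j = k) \<in> vecs (Suc k)" unfolding vecs_def by auto
    moreover have "(\<lambda>j. j = k) \<noteq> (\<lambda>_. False)" by (metis)
    ultimately obtain i0 where i0: "i0 \<in> I" "ip (\<lambda>j. j = k) (z i0)" using hyp by blast
    then have zi0k: "z i0 k" using ip_single by simp
    define z' where "z' l = (if z l k then vadd (z l) (z i0) else z l)" for l
    define J where "J = I - {i0}"
    have fJ: "finite J" using fI unfolding J_def by auto
    have z'in: "\<forall>l\<in>J. z' l \<in> vecs k"
    proof
      fix l assume "l \<in> J"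
      then have "z l \<in> vecs (Suc k)" "z i0 \<in> vecs (Suc k)" using zin i0 unfolding J_def by auto
      then have "\<forall>i>k. \<not> z l i" "\<forall>i>k. \<not> z i0 i" using vecs_Suc_iff by auto
      then show "z' l \<in> vecs k" unfolding vecs_k_iff z'_def vadd_def using zi0k
        by auto
    qed
    have hypk: "\<forall>a\<in>vecs k. a \<noteq> (\<lambda>_. False) \<longrightarrow> (\<exists>l\<in>J. ip a (z' l))"
    proof (intro ballI impI, rule ccontr)
      fix a assume a: "a \<in> vecs k" and anz: "a \<noteq> (\<lambda>_. False)" and no: "\<not> (\<exists>l\<in>J. ip a (z' l))"
      define a' where "a' = a(k := ip a (z i0))"
      have a'v: "a' \<in> vecs (Suc k)" using a unfolding a'_def vecs_def by auto
      have "a' \<noteq> (\<lambda>_. False)"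
      proof
        assume "a' = (\<lambda>_. False)"
        then have "\<forall>j. j \<noteq> k \<longrightarrow> \<not> a j" unfolding a'_def by (metis fun_upd_other)
        moreover have "\<not> a k" using a unfolding vecs_def by auto
        ultimately show False using anz by auto
      qed
      then obtain i where i: "i \<in> I" "ip a' (z i)" using hyp a'v by blast
      have ipa': "\<And>u. ip a' u = (ip a u \<noteq> (ip a (z i0) \<and> u k))"
        unfolding a'_def by (rule ip_upd[OF a])
      show False
      proof (cases "i = i0")
        case True
        then show False using i ipa' zi0k by simp
      next
        case False
        then have iJ: "i \<in> J" unfolding J_def using i by auto
        then have nz: "\<not> ip a (z' i)" using no by auto
        show False
        proof (cases "z i k")
          case True
          then have "ip a (z' i) = (ip a (z i) \<noteq> ip a (z i0))" unfolding z'_def using ip_vadd[OF a] by simp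
          then show False using nz i ipa' True by auto
        next
          case False
          then show False using nz i ipa' unfolding z'_def by simp
        qed
      qed
    qed
    have IHk: "vecs k \<subseteq> spanI J z'" using Suc.IH fJ z'in hypk by blast
    have sub: "spanI J z' \<subseteq> spanI I z"
    proof (rule span_least[OF fJ span_zero])
      show "\<And>u v. u \<in> spanI I z \<Longrightarrow> v \<in> spanI I z \<Longrightarrow> vadd u v \<in> spanI I z"
        using span_vadd[OF fI] by blast
      fix l assume "l \<in> J"
      then have "l \<in> I" unfolding J_def by auto
      then show "z' l \<in> spanI I z" unfolding z'_def
        using span_gen[OF fI] span_vadd[OF fI] i0(1) by auto
    qed
    show "vecs (Suc k) \<subseteq> spanI I z"
    proof
      fix v assume v: "v \<in> vecs (Suc k)"
      show "v \<in> spanI I z"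
      proof (cases "v k")
        case False
        moreover have "\<forall>i>k. \<not> v i" using v vecs_Suc_iff by auto
        ultimately have "v \<in> vecs k" unfolding vecs_k_iff by auto
        then show ?thesis using IHk sub by auto
      next
        case True
        have zi0v: "z i0 \<in> vecs (Suc k)" using zin i0 by auto
        have "\<forall>i>k. \<not> v i" "\<forall>i>k. \<not> z i0 i" using v zi0v vecs_Suc_iff by auto
        then have "vadd v (z i0) \<in> vecs k" using True zi0k unfolding vecs_k_iff vadd_def
          by auto
        then have w: "vadd v (z i0) \<in> spanI I z" using IHk sub by auto
        have "v = vadd (vadd v (z i0)) (z i0)" unfolding vadd_def by auto
        then show ?thesis using span_vadd[OF fI w span_gen[OF fI i0(1)]] by simp
      qed
    qed
  qed
qed

definition code :: "nat \<Rightarrow> ((nat \<Rightarrow> bool) \<Rightarrow> bool) \<Rightarrow> (nat \<Rightarrow> bool)" where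
  "code k \<xi> = (\<lambda>j. j < k \<and> \<xi> (\<lambda>i. i = j))"

lemma code_vecs: "code k \<xi> \<in> vecs k" unfolding code_def vecs_def by auto

lemma basis_span: "vecs k \<subseteq> spanI {0..<k} (\<lambda>j i. i = j)"
proof -
  have "\<forall>i\<in>{0..<k}. (\<lambda>i'. i' = i) \<in> vecs k" unfolding vecs_def by auto
  moreover have "\<forall>a\<in>vecs k. a \<noteq> (\<lambda>_. False) \<longrightarrow> (\<exists>i\<in>{0..<k}. ip a (\<lambda>i'. i' = i))"
  proof (intro ballI impI)
    fix a assume a: "a \<in> vecs k" "a \<noteq> (\<lambda>_. False)"
    then obtain j where j: "a j" by auto
    have "\<forall>i. k \<le> i \<longrightarrow> \<not> a i" using a(1) unfolding vecs_def by simp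
    then have "j < k" using j not_le by blast
    moreover have "ip a (\<lambda>i'. i' = j)"
    proof -
      have "{j'. a j' \<and> j' = j} = {j}" using j by auto
      then show ?thesis unfolding ip_def by simp
    qed
    ultimately show "\<exists>i\<in>{0..<k}. ip a (\<lambda>i'. i' = i)" by auto
  qed
  ultimately show ?thesis using rank_lemma[of k, rule_format, of "{0..<k}" "\<lambda>j i. i = j"] by simp
qed

lemma code_rep:
  assumes xi: "\<xi> \<in> dual k" and u: "u \<in> vecs k"
  shows "\<xi> u = ip (code k \<xi>) u"
proof -
  let ?c = "code k \<xi>"
  let ?W = "{u\<in>vecs k. \<xi> u = ip ?c u}"
  have "spanI {0..<k} (\<lambda>j i. i = j) \<subseteq> ?W"
  proof (rule span_least)
    show "finite {0..<k}" by simp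
    show "(\<lambda>_. False) \<in> ?W" using zero_vecs dual_zero[OF xi] unfolding ip_def by simp
    show "\<And>u v. u \<in> ?W \<Longrightarrow> v \<in> ?W \<Longrightarrow> vadd u v \<in> ?W"
    proof -
      fix u v assume "u \<in> ?W" "v \<in> ?W"
      then have uv: "u \<in> vecs k" "v \<in> vecs k" "\<xi> u = ip ?c u" "\<xi> v = ip ?c v" by auto
      have "\<xi> (vadd u v) = (\<xi> u \<noteq> \<xi> v)" using xi uv(1,2) unfolding dual_def by blast
      moreover have "ip ?c (vadd u v) = (ip ?c u \<noteq> ip ?c v)" by (rule ip_vadd[OF code_vecs])
      ultimately show "vadd u v \<in> ?W" using uv vadd_vecs by simp
    qed
    fix i assume i: "i \<in> {0..<k}"
    have "{j. ?c j \<and> j = i} = (if \<xi> (\<lambda>i'. i' = i) then {i} else {})" using i unfolding code_def by auto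
    then have "ip ?c (\<lambda>i'. i' = i) = \<xi> (\<lambda>i'. i' = i)" unfolding ip_def by simp
    moreover have "(\<lambda>i'. i' = i) \<in> vecs k" using i unfolding vecs_def by auto
    ultimately show "(\<lambda>i'. i' = i) \<in> ?W" by simp
  qed
  then show ?thesis using basis_span u by blast
qed

lemma code_nz:
  assumes xi: "\<xi> \<in> dual k" and nz: "nonzero_functional k \<xi>"
  shows "code k \<xi> \<noteq> (\<lambda>_. False)"
proof
  assume c: "code k \<xi> = (\<lambda>_. False)"
  obtain u where u: "u \<in> vecs k" "\<xi> u" using nz unfolding nonzero_functional_def by auto
  have "ip (code k \<xi>) u = False" unfolding c ip_def by simp
  then show False using code_rep[OF xi u(1)] u(2) by simp
qed

lemma tuples_mem: "z \<in> tuples n k \<Longrightarrow> i < n \<Longrightarrow> z i \<in> vecs k"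
  unfolding tuples_def by auto

lemma St_crit:
  assumes z: "z \<in> tuples n k"
    and h: "\<forall>a\<in>vecs k. a \<noteq> (\<lambda>_. False) \<longrightarrow> (\<exists>i\<in>{0..<n}. ip a (z i))"
  shows "z \<in> St n k"
proof -
  have eq: "span2 n z = spanI {0..<n} z" unfolding span2_def spanI_def by simp
  have zi: "\<forall>i\<in>{0..<n}. z i \<in> vecs k" using tuples_mem[OF z] by auto
  have "vecs k \<subseteq> spanI {0..<n} z" using rank_lemma[of k, rule_format, of "{0..<n}" z] zi h by simp
  moreover have "spanI {0..<n} z \<subseteq> vecs k"
    by (rule span_least) (use zi zero_vecs vadd_vecs in auto)
  ultimately show ?thesis unfolding St_def using z eq by auto
qed

lemma S_sum_formula:
  "S_sum n \<xi> z = real n - 2 * real (card {i\<in>{0..<n}. \<xi> (z i)})"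
proof -
  have "S_sum n \<xi> z = (\<Sum>i\<in>{0..<n}. 1 - 2 * (if \<xi> (z i) then 1 else 0))"
    unfolding S_sum_def chi_def lessThan_atLeast0 by (intro sum.cong) auto
  also have "\<dots> = real n - 2 * (\<Sum>i\<in>{0..<n}. (if \<xi> (z i) then 1 else 0))"
    by (simp add: sum_subtractf sum_distrib_left)
  also have "(\<Sum>i\<in>{0..<n}. (if \<xi> (z i) then 1 else 0)) = real (card {i\<in>{0..<n}. \<xi> (z i)})"
    by (simp add: sum.If_cases Int_def)
  finally show ?thesis .
qed

definition Bad :: "nat \<Rightarrow> nat \<Rightarrow> (nat \<Rightarrow> bool) \<Rightarrow> (nat \<Rightarrow> nat \<Rightarrow> bool) set" where
  "Bad n k a = {z\<in>tuples n k. real n / 4 < \<bar>S_sum n (ip a) z\<bar>}"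

lemma S_sum_code:
  assumes "\<xi> \<in> dual k" "z \<in> tuples n k"
  shows "S_sum n \<xi> z = S_sum n (ip (code k \<xi>)) z"
  unfolding S_sum_def chi_def using code_rep[OF assms(1) tuples_mem[OF assms(2)]] by simp

lemma bad_cover:
  assumes n: "0 < n"
  shows "tuples n k - G_tr n k \<subseteq> (\<Union>a\<in>vecs k - {\<lambda>_. False}. Bad n k a)"
proof
  fix z assume z: "z \<in> tuples n k - G_tr n k"
  show "z \<in> (\<Union>a\<in>vecs k - {\<lambda>_. False}. Bad n k a)"
  proof (rule ccontr)
    assume nb: "z \<notin> (\<Union>a\<in>vecs k - {\<lambda>_. False}. Bad n k a)"
    have zt: "z \<in> tuples n k" using z by auto
    have small: "\<And>a. a \<in> vecs k \<Longrightarrow> a \<noteq> (\<lambda>_. False) \<Longrightarrow> \<bar>S_sum n (ip a) z\<bar> \<le> real n / 4"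
    proof -
      fix a assume "a \<in> vecs k" "a \<noteq> (\<lambda>_. False)"
      then have "z \<notin> Bad n k a" using nb by blast
      then show "\<bar>S_sum n (ip a) z\<bar> \<le> real n / 4" using zt unfolding Bad_def by auto
    qed
    have "\<forall>a\<in>vecs k. a \<noteq> (\<lambda>_. False) \<longrightarrow> (\<exists>i\<in>{0..<n}. ip a (z i))"
    proof (intro ballI impI, rule ccontr)
      fix a assume a: "a \<in> vecs k" "a \<noteq> (\<lambda>_. False)" and no: "\<not> (\<exists>i\<in>{0..<n}. ip a (z i))"
      then have "{i\<in>{0..<n}. ip a (z i)} = {}" by auto
      then have "S_sum n (ip a) z = real n" using S_sum_formula by simp
      then show False using small[OF a] n by simp
    qed
    then have "z \<in> St n k" using St_crit zt by blast
    moreover have "\<forall>\<xi>\<in>dual k. nonzero_functional k \<xi> \<longrightarrow> \<bar>S_sum n \<xi> z\<bar> \<le> real n / 4"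
    proof (intro ballI impI)
      fix \<xi> assume xi: "\<xi> \<in> dual k" and nz: "nonzero_functional k \<xi>"
      have "\<bar>S_sum n (ip (code k \<xi>)) z\<bar> \<le> real n / 4"
        by (rule small[OF code_vecs code_nz[OF xi nz]])
      then show "\<bar>S_sum n \<xi> z\<bar> \<le> real n / 4" using S_sum_code[OF xi zt] by simp
    qed
    ultimately have "z \<in> G_tr n k" unfolding G_tr_def by blast
    then show False using z by blast
  qed
qed

lemma card_split: "finite X \<Longrightarrow> card {x\<in>X. P x} + card {x\<in>X. \<not> P x} = card X"
proof -
  assume f: "finite X"
  have "card ({x\<in>X. P x} \<union> {x\<in>X. \<not> P x}) = card {x\<in>X. P x} + card {x\<in>X. \<not> P x}"
    by (rule card_Un_disjoint) (use f in auto)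
  moreover have "{x\<in>X. P x} \<union> {x\<in>X. \<not> P x} = X" by auto
  ultimately show ?thesis by simp
qed

lemma vecs_image: "vecs k = (\<lambda>S i. i \<in> S) ` Pow {0..<k}"
proof
  show "vecs k \<subseteq> (\<lambda>S i. i \<in> S) ` Pow {0..<k}"
  proof
    fix v assume v: "v \<in> vecs k"
    have "{i. v i} \<subseteq> {0..<k}" using v unfolding vecs_def by (auto simp: not_le[symmetric])
    moreover have "v = (\<lambda>i. i \<in> {i. v i})" by simp
    ultimately show "v \<in> (\<lambda>S i. i \<in> S) ` Pow {0..<k}" by blast
  qed
  show "(\<lambda>S i. i \<in> S) ` Pow {0..<k} \<subseteq> vecs k" unfolding vecs_def by auto
qed

lemma vecs_finite_card: "finite (vecs k)" "card (vecs k) = 2 ^ k"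
proof -
  have inj: "inj_on (\<lambda>S i. i \<in> S) (Pow {0..<k})"
    by (rule inj_onI) (simp add: fun_eq_iff set_eq_iff)
  show "finite (vecs k)" unfolding vecs_image by simp
  show "card (vecs k) = 2 ^ k" unfolding vecs_image card_image[OF inj] by (simp add: card_Pow)
qed

lemma tuples_finite_card: "finite (tuples n k)" "card (tuples n k) = (2 ^ k) ^ n"
  unfolding tuples_def using vecs_finite_card
  by (auto simp: card_PiE finite_PiE)

lemma half:
  assumes a: "a \<in> vecs k" "a \<noteq> (\<lambda>_. False)"
  shows "2 * card {v\<in>vecs k. ip a v} = 2 ^ k" "2 * card {v\<in>vecs k. \<not> ip a v} = 2 ^ k"
proof -
  obtain j0 where j0: "a j0" using a by auto
  have "\<forall>i. k \<le> i \<longrightarrow> \<not> a i" using a(1) unfolding vecs_def by simp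
  then have "j0 < k" using j0 not_le by blast
  define e where "e = (\<lambda>i. i = j0)"
  have ev: "e \<in> vecs k" unfolding e_def vecs_def using \<open>j0 < k\<close> by auto
  have "{j. a j \<and> e j} = {j0}" unfolding e_def using j0 by auto
  then have ipe: "ip a e" unfolding ip_def by simp
  have tt: "\<And>v. vadd (vadd v e) e = v" unfolding vadd_def by auto
  have flip: "\<And>v. ip a (vadd v e) = (\<not> ip a v)" using ip_vadd[OF a(1)] ipe by simp
  have "bij_betw (\<lambda>v. vadd v e) {v\<in>vecs k. ip a v} {v\<in>vecs k. \<not> ip a v}"
    by (rule bij_betw_byWitness[where f'="\<lambda>v. vadd v e"]) (auto simp: tt flip vadd_vecs ev)
  then have eq: "card {v\<in>vecs k. ip a v} = card {v\<in>vecs k. \<not> ip a v}" by (rule bij_betw_same_card)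
  have "card {v\<in>vecs k. ip a v} + card {v\<in>vecs k. \<not> ip a v} = 2 ^ k"
    using card_split[OF vecs_finite_card(1)] vecs_finite_card(2) by simp
  then show "2 * card {v\<in>vecs k. ip a v} = 2 ^ k" "2 * card {v\<in>vecs k. \<not> ip a v} = 2 ^ k"
    using eq by auto
qed

lemma mgf:
  assumes P: "2 * card {v\<in>vecs k. P v} = 2 ^ k"
  shows "(\<Sum>z\<in>tuples n k. (2::real) ^ card {i\<in>{0..<n}. P (z i)}) = (3 * 2 ^ k / 2) ^ n"
proof -
  have 1: "\<And>z. (2::real) ^ card {i\<in>{0..<n}. P (z i)} = (\<Prod>i\<in>{0..<n}. (if P (z i) then 2 else 1))"
  proof -
    fix z
    have "(\<Prod>i\<in>{0..<n}. (if P (z i) then (2::real) else 1)) = 2 ^ card ({0..<n} \<inter> {i. P (z i)})"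
      by (simp add: prod.If_cases)
    moreover have "{0..<n} \<inter> {i. P (z i)} = {i\<in>{0..<n}. P (z i)}" by auto
    ultimately show "(2::real) ^ card {i\<in>{0..<n}. P (z i)} = (\<Prod>i\<in>{0..<n}. (if P (z i) then 2 else 1))"
      by simp
  qed
  have "(\<Sum>z\<in>tuples n k. (2::real) ^ card {i\<in>{0..<n}. P (z i)})
      = (\<Sum>z\<in>PiE {0..<n} (\<lambda>_. vecs k). \<Prod>i\<in>{0..<n}. (if P (z i) then 2 else 1))"
    unfolding tuples_def using 1 by simp
  also have "\<dots> = (\<Prod>i\<in>{0..<n}. \<Sum>v\<in>vecs k. (if P v then (2::real) else 1))"
    by (rule prod_sum_PiE[symmetric]) (auto simp: vecs_finite_card)
  also have "(\<Sum>v\<in>vecs k. (if P v then (2::real) else 1)) = 3 * 2 ^ k / 2"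
  proof -
    have fv: "finite (vecs k)" by (rule vecs_finite_card)
    have "(\<Sum>v\<in>vecs k. (if P v then (2::real) else 1))
        = 2 * real (card (vecs k \<inter> {v. P v})) + real (card (vecs k \<inter> - {v. P v}))"
      using fv by (simp add: sum.If_cases)
    moreover have "vecs k \<inter> {v. P v} = {v\<in>vecs k. P v}" "vecs k \<inter> - {v. P v} = {v\<in>vecs k. \<not> P v}" by auto
    moreover have "real (card {v\<in>vecs k. P v}) + real (card {v\<in>vecs k. \<not> P v}) = 2 ^ k"
      using card_split[OF fv, of P] vecs_finite_card(2) by (metis of_nat_add of_nat_numeral of_nat_power)
    moreover have "2 * real (card {v\<in>vecs k. P v}) = 2 ^ k"
      using P by (metis of_nat_mult of_nat_numeral of_nat_power)
    ultimately show ?thesis by simp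
  qed
  finally show ?thesis by simp
qed

lemma chernoff:
  assumes P: "2 * card {v\<in>vecs k. P v} = 2 ^ k"
  shows "real (card {z\<in>tuples n k. 5 * n < 8 * card {i\<in>{0..<n}. P (z i)}}) * 2 powr (5 * real n / 8)
         \<le> (3 * 2 ^ k / 2) ^ n"
proof -
  let ?X = "{z\<in>tuples n k. 5 * n < 8 * card {i\<in>{0..<n}. P (z i)}}"
  have fT: "finite (tuples n k)" by (rule tuples_finite_card)
  have "real (card ?X) * 2 powr (5 * real n / 8) = (\<Sum>z\<in>?X. 2 powr (5 * real n / 8))" by simp
  also have "\<dots> \<le> (\<Sum>z\<in>?X. (2::real) ^ card {i\<in>{0..<n}. P (z i)})"
  proof (rule sum_mono)
    fix z assume "z \<in> ?X"
    then have "real (5 * n) / 8 \<le> real (card {i\<in>{0..<n}. P (z i)})" by simp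
    then have "2 powr (5 * real n / 8) \<le> 2 powr real (card {i\<in>{0..<n}. P (z i)})" by simp
    then show "2 powr (5 * real n / 8) \<le> (2::real) ^ card {i\<in>{0..<n}. P (z i)}"
      by (simp add: powr_realpow)
  qed
  also have "\<dots> \<le> (\<Sum>z\<in>tuples n k. (2::real) ^ card {i\<in>{0..<n}. P (z i)})"
    by (rule sum_mono2[OF fT]) auto
  also have "\<dots> = (3 * 2 ^ k / 2) ^ n" by (rule mgf[OF P])
  finally show ?thesis .
qed

lemma bad_bound:
  assumes a: "a \<in> vecs k" "a \<noteq> (\<lambda>_. False)"
  shows "real (card (Bad n k a)) \<le> 2 * (3 * 2 ^ k / 2) ^ n / 2 powr (5 * real n / 8)"
proof -
  let ?X1 = "{z\<in>tuples n k. 5 * n < 8 * card {i\<in>{0..<n}. ip a (z i)}}"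
  let ?X2 = "{z\<in>tuples n k. 5 * n < 8 * card {i\<in>{0..<n}. \<not> ip a (z i)}}"
  have fT: "finite (tuples n k)" by (rule tuples_finite_card)
  have sub: "Bad n k a \<subseteq> ?X1 \<union> ?X2"
  proof
    fix z assume z: "z \<in> Bad n k a"
    let ?m = "card {i\<in>{0..<n}. ip a (z i)}"
    let ?m' = "card {i\<in>{0..<n}. \<not> ip a (z i)}"
    have mm: "?m + ?m' = n" using card_split[of "{0..<n}" "\<lambda>i. ip a (z i)"] by simp
    have "real n / 4 < \<bar>real n - 2 * real ?m\<bar>" using z S_sum_formula unfolding Bad_def by simp
    then have "5 * n < 8 * ?m \<or> 5 * n < 8 * ?m'" using mm by linarith
    then show "z \<in> ?X1 \<union> ?X2" using z unfolding Bad_def by auto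
  qed
  have "real (card (Bad n k a)) \<le> real (card (?X1 \<union> ?X2))"
    using card_mono[OF _ sub] fT by simp
  also have "\<dots> \<le> real (card ?X1) + real (card ?X2)"
    using card_Un_le[of ?X1 ?X2] by linarith
  also have "\<dots> \<le> 2 * (3 * 2 ^ k / 2) ^ n / 2 powr (5 * real n / 8)"
  proof -
    have p: "0 < (2::real) powr (5 * real n / 8)" by simp
    have "real (card ?X1) * 2 powr (5 * real n / 8) \<le> (3 * 2 ^ k / 2) ^ n"
      by (rule chernoff[OF half(1)[OF a]])
    moreover have "real (card ?X2) * 2 powr (5 * real n / 8) \<le> (3 * 2 ^ k / 2) ^ n"
      using chernoff[where P="\<lambda>v. \<not> ip a v", OF half(2)[OF a]] by simp
    ultimately show ?thesis using p by (simp add: field_simps)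
  qed
  finally show ?thesis .
qed

lemma numeric:
  fixes n k :: nat
  assumes k1: "1 \<le> k" and kn: "real k \<le> 1/200 * real n"
  shows "2 ^ k * (2 * (3 / 2) ^ n / 2 powr (5 * real n / 8)) \<le> exp (- (1/100) * real n)"
proof -
  have l2: "0 < ln (2::real)" "ln (2::real) < 1" using ln_2_less_1 by auto
  have "ln ((6561::real) / 8192) = 8 * ln (3/2) - 5 * ln 2"
  proof -
    have h: "((3::real)/2) ^ 8 / 2 ^ 5 = 6561 / 8192" by (subst power_divide) simp
    have "ln ((6561::real) / 8192) = ln (((3::real)/2) ^ 8 / 2 ^ 5)" by (simp only: h)
    also have "\<dots> = ln (((3::real)/2) ^ 8) - ln ((2::real) ^ 5)" by (rule ln_divide_pos) simp_all
    also have "\<dots> = 8 * ln (3/2) - 5 * ln 2" by (simp only: ln_realpow)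
    finally show ?thesis .
  qed
  moreover have "ln ((6561::real) / 8192) \<le> 6561 / 8192 - 1" by (rule ln_le_minus_one) simp
  ultimately have key: "8 * ln (3/2) - 5 * ln 2 \<le> - (1631 / 8192 :: real)" by simp
  have e1: "(2::real) ^ k = exp (real k * ln 2)" by (simp add: exp_of_nat_mult)
  have e2: "((3::real) / 2) ^ n = exp (real n * ln (3/2))" by (simp add: exp_of_nat_mult)
  have e3: "(2::real) powr (5 * real n / 8) = exp (5 * real n / 8 * ln 2)" by (simp add: powr_def)
  have e4: "(2::real) = exp (ln 2)" by simp
  have "2 ^ k * (2 * (3 / 2) ^ n / 2 powr (5 * real n / 8))
      = exp (real k * ln 2 + ln 2 + real n * ln (3/2) - 5 * real n / 8 * ln 2)"
    unfolding e1 e2 e3 by (subst (2) e4) (simp add: exp_add exp_diff)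
  also have "\<dots> \<le> exp (- (1/100) * real n)"
  proof -
    have a: "real n * (8 * ln (3/2) - 5 * ln 2) \<le> real n * (- (1631 / 8192))"
      by (rule mult_left_mono[OF key]) simp
    have b: "(real k + 1) * ln 2 \<le> (real k + 1) * 1"
      by (rule mult_left_mono) (use l2 in auto)
    have n200: "200 \<le> real n" using k1 kn by simp
    have "real k * ln 2 + ln 2 + real n * ln (3/2) - 5 * real n / 8 * ln 2
        = (real k + 1) * ln 2 + real n * (8 * ln (3/2) - 5 * ln 2) / 8" by (simp add: field_simps)
    also have "\<dots> \<le> - (1/100) * real n" using a b n200 kn by (simp add: field_simps)
    finally show ?thesis by simp
  qed
  finally show ?thesis .
qed

lemma G_sub: "G_tr n k \<subseteq> St n k" "St n k \<subseteq> tuples n k"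
  unfolding G_tr_def St_def by auto

lemma mu_bound:
  assumes n: "0 < n"
  shows "mu_Gc n k \<le> 2 ^ k * (2 * (3 / 2) ^ n / 2 powr (5 * real n / 8))"
proof -
  let ?B = "2 * (3 * 2 ^ k / 2) ^ n / 2 powr (5 * real n / 8) :: real"
  have fT: "finite (tuples n k)" and cT: "card (tuples n k) = (2 ^ k) ^ n" by (rule tuples_finite_card)+
  have GT: "G_tr n k \<subseteq> tuples n k" using G_sub by blast
  have fV: "finite (vecs k - {\<lambda>_. False})" using vecs_finite_card(1) by simp
  have "real (card (tuples n k - G_tr n k)) \<le> real (card (\<Union>a\<in>vecs k - {\<lambda>_. False}. Bad n k a))"
  proof -
    have "finite (\<Union>a\<in>vecs k - {\<lambda>_. False}. Bad n k a)" using fV fT unfolding Bad_def by auto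
    then show ?thesis using card_mono bad_cover[OF n] by (metis of_nat_le_iff)
  qed
  also have "\<dots> \<le> real (\<Sum>a\<in>vecs k - {\<lambda>_. False}. card (Bad n k a))"
    using card_UN_le[OF fV] by (metis of_nat_le_iff)
  also have "\<dots> = (\<Sum>a\<in>vecs k - {\<lambda>_. False}. real (card (Bad n k a)))" by simp
  also have "\<dots> \<le> (\<Sum>a\<in>vecs k - {\<lambda>_. False}. ?B)"
    by (rule sum_mono) (use bad_bound in auto)
  also have "\<dots> = real (card (vecs k - {\<lambda>_. False})) * ?B" by simp
  also have "\<dots> \<le> 2 ^ k * ?B"
  proof (rule mult_right_mono)
    have "card (vecs k - {\<lambda>_. False}) \<le> card (vecs k)" by (rule card_mono) (auto simp: vecs_finite_card)
    then show "real (card (vecs k - {\<lambda>_. False})) \<le> 2 ^ k" using vecs_finite_card(2)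
      by (metis of_nat_le_iff of_nat_numeral of_nat_power)
    show "0 \<le> ?B" by simp
  qed
  finally have c: "real (card (tuples n k - G_tr n k)) \<le> 2 ^ k * ?B" .
  have "mu_Gc n k = real (card (tuples n k - G_tr n k)) / real (card (tuples n k))"
  proof -
    have "card (tuples n k - G_tr n k) = card (tuples n k) - card (G_tr n k)"
      by (rule card_Diff_subset) (use GT fT in \<open>auto intro: finite_subset\<close>)
    moreover have "card (G_tr n k) \<le> card (tuples n k)" by (rule card_mono[OF fT GT])
    moreover have "0 < card (tuples n k)" using cT by simp
    ultimately show ?thesis unfolding mu_Gc_def by (simp add: field_simps of_nat_diff)
  qed
  also have "\<dots> \<le> 2 ^ k * ?B / real (card (tuples n k))"
    by (rule divide_right_mono[OF c]) simp
  also have "\<dots> = 2 ^ k * (2 * (3 / 2) ^ n / 2 powr (5 * real n / 8))"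
    unfolding cT by (simp add: power_mult_distrib power_divide field_simps)
  finally show ?thesis .
qed

lemma pi_le_mu: "pi_Gc n k \<le> mu_Gc n k"
proof -
  have fT: "finite (tuples n k)" by (rule tuples_finite_card)
  have c1: "card (G_tr n k) \<le> card (St n k)" by (rule card_mono[OF finite_subset[OF G_sub(2) fT] G_sub(1)])
  have c2: "card (St n k) \<le> card (tuples n k)" by (rule card_mono[OF fT G_sub(2)])
  show ?thesis
  proof (cases "card (St n k) = 0")
    case True
    then show ?thesis using c1 unfolding pi_Gc_def mu_Gc_def by simp
  next
    case False
    then have "real (card (G_tr n k)) / real (card (tuples n k)) \<le> real (card (G_tr n k)) / real (card (St n k))"
      using c2 by (intro divide_left_mono) auto
    then show ?thesis unfolding pi_Gc_def mu_Gc_def by simp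
  qed
qed

theorem lemma3p1:
  shows "\<exists>\<epsilon>0>0. \<exists>c0>0. \<forall>n k. 1 \<le> k \<longrightarrow> real k \<le> \<epsilon>0 * real n \<longrightarrow>
           pi_Gc n k \<le> exp (- c0 * real n) \<and> mu_Gc n k \<le> exp (- c0 * real n)"
proof -
  have "\<forall>n k. 1 \<le> k \<longrightarrow> real k \<le> 1/200 * real n \<longrightarrow>
           pi_Gc n k \<le> exp (- (1/100) * real n) \<and> mu_Gc n k \<le> exp (- (1/100) * real n)"
  proof (intro allI impI)
    fix n k :: nat
    assume k1: "1 \<le> k" and kn: "real k \<le> 1/200 * real n"
    have n: "0 < n" using k1 kn by (cases n) auto
    have mu: "mu_Gc n k \<le> exp (- (1/100) * real n)"
      using mu_bound[OF n, of k] numeric[OF k1 kn] by linarith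
    moreover have "pi_Gc n k \<le> exp (- (1/100) * real n)" using pi_le_mu mu by (rule order_trans)
    ultimately show "pi_Gc n k \<le> exp (- (1/100) * real n) \<and> mu_Gc n k \<le> exp (- (1/100) * real n)" by simp
  qed
  then show ?thesis by (intro exI[of _ "1/200::real"] conjI exI[of _ "1/100::real"]) simp_all
qed

end
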